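(* Let $U\in C^{3}(\mathbb{R}^{d})$ be a Morse function, $\boldsymbol{\ell}$ a $C^{1}$ vector field with $\nabla U\cdot\boldsymbol{\ell}\equiv0$, and $\boldsymbol{\sigma}$ a critical point of $U$ such that $\mathbb{H}=\nabla^{2}U(\boldsymbol{\sigma})$ has exactly one negative eigenvalue. Let $\mathbb{L}=D\boldsymbol{\ell}(\boldsymbol{\sigma})$, let $-\mu$ be the unique negative eigenvalue of $\mathbb{H}-\mathbb{L}^{\dagger}$, and $\boldsymbol{v}$ a unit eigenvector of $\mathbb{H}-\mathbb{L}^{\dagger}$ for $-\mu$. Then: (1) $\mathbb{H}+2\mu\,\boldsymbol{v}\otimes\boldsymbol{v}$ is symmetric positive definite and $\det(\mathbb{H}+2\mu\,\boldsymbol{v}\otimes\boldsymbol{v})=-\det\mathbb{H}$; (2) $\mathbb{H}+\mu\,\boldsymbol{v}\otimes\boldsymbol{v}$ is symmetric non-negative definite with $\det(\mathbb{H}+\mu\,\boldsymbol{v}\otimes\boldsymbol{v})=0$, and its null space is one-dimensional, spanned by $\mathbb{H}^{-1}\boldsymbol{v}$.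
   Context: $\mathbb{L}^{\dagger}$ is the transpose; $(\boldsymbol{u}\otimes\boldsymbol{w})_{ij}=u_{i}w_{j}$. Under these hypotheses $\mathbb{H}-\mathbb{L}^{\dagger}$ is similar to $\mathbb{H}+\mathbb{L}$, which is invertible with exactly one negative eigenvalue, so $\mu>0$ is well defined. *)

theory Defs
  imports "HOL-Analysis.Analysis" "HOL-Computational_Algebra.Polynomial"
begin

text \<open>Continuous differentiability on all of R^n: differentiable everywhere and
  every partial derivative is continuous (equivalent to the Frechet derivative being continuous).\<close>
definition C1_fun :: "(real^'n \<Rightarrow> 'b::real_normed_vector) \<Rightarrow> bool" where
  "C1_fun f \<longleftrightarrow> (\<forall>x. f differentiable (at x)) \<and>
     (\<forall>i. continuous_on UNIV (\<lambda>x. frechet_derivative f (at x) (axis i 1)))"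

definition grad :: "(real^'n \<Rightarrow> real) \<Rightarrow> real^'n \<Rightarrow> real^'n" where
  "grad U x = (\<chi> i. frechet_derivative U (at x) (axis i 1))"

definition hess :: "(real^'n \<Rightarrow> real) \<Rightarrow> real^'n \<Rightarrow> real^'n^'n" where
  "hess U x = jacobian (grad U) (at x)"

definition C3_fun :: "(real^'n \<Rightarrow> real) \<Rightarrow> bool" where
  "C3_fun U \<longleftrightarrow> C1_fun U \<and> C1_fun (grad U) \<and> C1_fun (hess U)"

definition morse :: "(real^'n \<Rightarrow> real) \<Rightarrow> bool" where
  "morse U \<longleftrightarrow> (\<forall>x. grad U x = 0 \<longrightarrow> det (hess U x) \<noteq> 0)"

definition charpoly :: "real^'n^'n \<Rightarrow> real poly" where
  "charpoly A = det (\<chi> i j. (if i = j then [:0, 1:] else 0) - [:A $ i $ j:])"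

definition num_neg_eigenvalues :: "real^'n^'n \<Rightarrow> nat" where
  "num_neg_eigenvalues A =
     (\<Sum>e\<in>{e. e < 0 \<and> poly (charpoly A) e = 0}. order e (charpoly A))"

definition outer :: "real^'n \<Rightarrow> real^'n \<Rightarrow> real^'n^'n" where
  "outer u w = (\<chi> i j. u $ i * w $ j)"

end

theory Submission
  imports Defs
begin

lemma det_row_comb_gen:
  fixes A :: "'a::comm_ring_1^'n^'n"
  assumes "finite S" "k \<notin> S"
  shows "det (\<chi> i. if i = k then a + (\<Sum>j\<in>S. c j *s row j A) else row i A)
       = det (\<chi> i. if i = k then a else row i A)"
  using assms
proof (induction S rule: finite_induct)
  case empty
  have "a + (\<Sum>j\<in>{}. c j *s row j A) = a" by (simp only: sum.empty add_0_right)
  then show ?case by (simp only:)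
next
  case (insert j S)
  have jk: "j \<noteq> k" using insert by auto
  have "det (\<chi> i. if i = k then a + (\<Sum>j\<in>insert j S. c j *s row j A) else row i A)
      = det (\<chi> i. if i = k then (a + (\<Sum>j\<in>S. c j *s row j A)) + c j *s row j A else row i A)"
  proof -
    have "a + (\<Sum>j\<in>insert j S. c j *s row j A) = (a + (\<Sum>j\<in>S. c j *s row j A)) + c j *s row j A"
      using insert(1,2) by (simp add: sum.insert algebra_simps)
    then show ?thesis by (simp only:)
  qed
  also have "\<dots> = det (\<chi> i. if i = k then (a + (\<Sum>j\<in>S. c j *s row j A)) else row i A)
      + det (\<chi> i. if i = k then c j *s row j A else row i A)"
    by (rule det_row_add)
  also have "det (\<chi> i. if i = k then c j *s row j A else row i A)
      = c j * det (\<chi> i. if i = k then row j A else row i A)"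
    by (rule det_row_mul)
  also have "det (\<chi> i. if i = k then row j A else row i A) = 0"
    by (rule det_identical_rows[OF jk[symmetric]]) (use jk in \<open>simp add: row_def\<close>)
  finally show ?case using insert by simp
qed

lemma cramer_ring:
  fixes A :: "'a::comm_ring_1^'n^'n"
  shows "det (\<chi> i. if i = k then (\<Sum>m\<in>UNIV. x$m *s row m A) else row i A) = x$k * det A"
proof -
  have U: "(UNIV::'n set) = insert k (UNIV - {k})" by auto
  have eq: "(\<Sum>m\<in>UNIV. x$m *s row m A) = x$k *s row k A + (\<Sum>m\<in>UNIV-{k}. x$m *s row m A)"
    by (subst U, subst sum.insert) auto
  have "det (\<chi> i. if i = k then (\<Sum>m\<in>UNIV. x$m *s row m A) else row i A)
     = det (\<chi> i. if i = k then x$k *s row k A else row i A)"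
    unfolding eq by (rule det_row_comb_gen) auto
  also have "\<dots> = x$k * det (\<chi> i. if i = k then row k A else row i A)"
    by (rule det_row_mul)
  also have "(\<chi> i. if i = k then row k A else row i A) = A"
    by (simp add: vec_eq_iff row_def)
  finally show ?thesis .
qed

lemma cramer_ring_col:
  fixes A :: "'a::comm_ring_1^'n^'n"
  shows "det (\<chi> i j. if j = k then (A *v x)$i else A$i$j) = x$k * det A"
proof -
  have "(\<chi> i j. if j = k then (A *v x)$i else A$i$j)
     = transpose (\<chi> i. if i = k then (\<Sum>m\<in>UNIV. x$m *s row m (transpose A)) else row i (transpose A))"
    by (simp add: vec_eq_iff transpose_def row_def matrix_vector_mult_def sum_component mult.commute)
  then show ?thesis using cramer_ring[of k x "transpose A"] by simp
qed

lemma det_rank1_remove: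
  fixes A :: "'a::comm_ring_1^'n^'n"
  assumes "finite S" "k \<notin> S"
  shows "det (\<chi> i. if i = k then b else if i \<in> S then row i A + a$i *s b else row i A)
       = det (\<chi> i. if i = k then b else row i A)"
  using assms
proof (induction S rule: finite_induct)
  case empty
  show ?case by (rule arg_cong[where f=det]) (simp add: vec_eq_iff)
next
  case (insert j S)
  define B where "B = (\<chi> i. if i = k then b else if i \<in> S then row i A + a$i *s b else row i A)"
  have jk: "j \<noteq> k" using insert by auto
  have "det (\<chi> i. if i = j then row j B + a$j *s row k B else row i B) = det B"
    by (rule det_row_operation[OF jk])
  moreover have "(\<chi> i. if i = j then row j B + a$j *s row k B else row i B)
     = (\<chi> i. if i = k then b else if i \<in> insert j S then row i A + a$i *s b else row i A)"
    using insert jk unfolding B_def by (auto simp: vec_eq_iff row_def)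
  ultimately show ?case using insert B_def by simp
qed

lemma det_rank1_gen:
  fixes A :: "'a::comm_ring_1^'n^'n"
  assumes "finite S"
  shows "det (\<chi> i. if i \<in> S then row i A + a$i *s b else row i A)
       = det A + (\<Sum>k\<in>S. a$k * det (\<chi> i. if i = k then b else row i A))"
  using assms
proof (induction S rule: finite_induct)
  case empty
  have "(\<chi> i. row i A) = A" by (simp add: vec_eq_iff row_def)
  then show ?case by simp
next
  case (insert k S)
  define R where "R = (\<chi> i. if i \<in> S then row i A + a$i *s b else row i A)"
  have "(\<chi> i. if i \<in> insert k S then row i A + a$i *s b else row i A)
      = (\<chi> i. if i = k then row k A + a$k *s b else row i R)"
    unfolding R_def by (auto simp: vec_eq_iff row_def)
  also have "det \<dots> = det (\<chi> i. if i = k then row k A else row i R)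
      + det (\<chi> i. if i = k then a$k *s b else row i R)"
    by (rule det_row_add)
  also have "(\<chi> i. if i = k then row k A else row i R) = R"
    using insert unfolding R_def by (auto simp: vec_eq_iff row_def)
  also have "det (\<chi> i. if i = k then a$k *s b else row i R) = a$k * det (\<chi> i. if i = k then b else row i R)"
    by (rule det_row_mul)
  also have "(\<chi> i. if i = k then b else row i R)
      = (\<chi> i. if i = k then b else if i \<in> S then row i A + a$i *s b else row i A)"
    unfolding R_def by (auto simp: vec_eq_iff row_def)
  also have "det \<dots> = det (\<chi> i. if i = k then b else row i A)"
    using insert by (intro det_rank1_remove) auto
  finally show ?case using insert R_def by (simp add: algebra_simps)
qed

lemma det_rank1:
  fixes A :: "'a::comm_ring_1^'n^'n"
  shows "det (\<chi> i. row i A + a$i *s b)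
       = det A + (\<Sum>k\<in>UNIV. a$k * det (\<chi> i. if i = k then b else row i A))"
  using det_rank1_gen[of UNIV A a b] by simp

definition pmat :: "real^'n^'n \<Rightarrow> real poly^'n^'n" where
  "pmat H = (\<chi> i j. (if i = j then [:0, 1:] else 0) - [:H $ i $ j:])"

definition plift :: "real^'n \<Rightarrow> real poly^'n" where
  "plift e = (\<chi> i. [:e $ i:])"

lemma charpoly_pmat: "charpoly H = det (pmat H)"
  by (simp add: charpoly_def pmat_def)

lemma sum_const_poly: "(\<Sum>j\<in>S. [:f j:]) = [:(\<Sum>j\<in>S. f j):]"
  by (induction S rule: infinite_finite_induct) auto

lemma pmat_eigen:
  assumes "H *v e = lam *\<^sub>R e"
  shows "pmat H *v plift e = [:-lam, 1:] *s plift e"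
proof -
  have "(pmat H *v plift e) $ i = [:-lam, 1:] * [:e$i:]" for i
  proof -
    have "(pmat H *v plift e) $ i = (\<Sum>j\<in>UNIV. smult (e$j) ((if i = j then [:0, 1:] else 0) - [:H$i$j:]))"
      by (simp add: pmat_def plift_def matrix_vector_mult_def)
    also have "\<dots> = (\<Sum>j\<in>UNIV. smult (e$j) (if i = j then [:0, 1:] else 0)) - (\<Sum>j\<in>UNIV. [:H$i$j * e$j:])"
      by (simp add: smult_diff_right sum_subtractf mult.commute)
    also have "(\<Sum>j\<in>UNIV. smult (e$j) (if i = j then [:0, 1:] else 0)) = [:0,1:] * [:e$i:]"
      by (simp add: if_distrib cong: if_cong)
    also have "(\<Sum>j\<in>UNIV. [:H$i$j * e$j:]) = [:(H *v e)$i:]"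
      by (simp add: sum_const_poly matrix_vector_mult_def)
    finally show ?thesis using assms by simp
  qed
  then show ?thesis by (simp add: vec_eq_iff plift_def)
qed

lemma det_col_mul:
  fixes A :: "'a::comm_ring_1^'n^'n"
  shows "det (\<chi> i j. if j = k then c * v$i else A$i$j) = c * det (\<chi> i j. if j = k then v$i else A$i$j)"
proof -
  have 1: "(\<chi> i j. if j = k then c * v$i else A$i$j) = transpose (\<chi> j. if j = k then c *s v else row j (transpose A))"
    by (simp add: vec_eq_iff transpose_def row_def)
  have 2: "(\<chi> i j. if j = k then v$i else A$i$j) = transpose (\<chi> j. if j = k then v else row j (transpose A))"
    by (simp add: vec_eq_iff transpose_def row_def)
  show ?thesis unfolding 1 2 det_transpose by (rule det_row_mul)
qed

lemma eig_col:
  fixes N :: "'a::comm_ring_1^'n^'n"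
  assumes "N *v E = p *s E"
  shows "E$k * det N = p * det (\<chi> i j. if j = k then E$i else N$i$j)"
proof -
  have "E$k * det N = det (\<chi> i j. if j = k then (N *v E)$i else N$i$j)"
    by (rule cramer_ring_col[symmetric])
  also have "(\<chi> i j. if j = k then (N *v E)$i else N$i$j) = (\<chi> i j. if j = k then p * E$i else N$i$j)"
    using assms by (simp add: vec_eq_iff)
  also have "det (\<chi> i j. if j = k then p * E$i else N$i$j) = p * det (\<chi> i j. if j = k then E$i else N$i$j)"
    by (rule det_col_mul)
  finally show ?thesis .
qed

lemma const_dvd_cancel:
  fixes P Q R :: "real poly"
  assumes "c \<noteq> 0" "[:c:] * P = Q * R"
  shows "Q dvd P"
proof -
  have "smult c P = Q * R" using assms(2) by simp
  then have "Q dvd smult c P" by (metis dvd_triv_left)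
  then show ?thesis using assms(1) dvd_smult_cancel by blast
qed

lemma charpoly_order1:
  fixes H :: "real^'n^'n"
  assumes "H *v e = lam *\<^sub>R e" "e \<noteq> 0"
  shows "[:-lam, 1:] dvd charpoly H"
proof -
  obtain k where k: "e$k \<noteq> 0" using assms(2) by (auto simp: vec_eq_iff)
  have pk: "(plift e)$k = [:e$k:]" by (simp add: plift_def)
  have "(plift e)$k * det (pmat H) = [:-lam, 1:] * det (\<chi> i j. if j = k then (plift e)$i else (pmat H)$i$j)"
    using pmat_eigen[OF assms(1)] by (rule eig_col)
  then have "[:e$k:] * det (pmat H) = [:-lam, 1:] * det (\<chi> i j. if j = k then (plift e)$i else (pmat H)$i$j)"
    unfolding pk .
  then show ?thesis unfolding charpoly_pmat by (rule const_dvd_cancel[OF k])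
qed

lemma charpoly_order2:
  fixes H :: "real^'n^'n"
  assumes "H *v e = lam *\<^sub>R e" "e \<noteq> 0" "H *v f = lam *\<^sub>R f" "\<And>c. f \<noteq> c *\<^sub>R e"
  shows "[:-lam, 1:]^2 dvd charpoly H"
proof -
  obtain k where k: "e$k \<noteq> 0" using assms(2) by (auto simp: vec_eq_iff)
  define g where "g = f - (f$k / e$k) *\<^sub>R e"
  have gk: "g$k = 0" using k by (simp add: g_def)
  have g0: "g \<noteq> 0" using assms(4)[of "f$k / e$k"] by (auto simp: g_def)
  obtain m where m: "g$m \<noteq> 0" using g0 by (auto simp: vec_eq_iff)
  have Hg: "H *v g = lam *\<^sub>R g"
    using assms(1,3) by (simp add: g_def matrix_vector_mult_diff_distrib scaleR_matrix_vector_assoc algebra_simps)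
  define N where "N = pmat H"
  define N1 where "N1 = (\<chi> i j. if j = k then (plift e)$i else N$i$j)"
  have 1: "(plift e)$k * det N = [:-lam, 1:] * det N1"
    unfolding N_def N1_def by (rule eig_col[OF pmat_eigen[OF assms(1)]])
  have "N1 *v plift g = N *v plift g"
  proof -
    have "(N1 *v plift g)$i = (N *v plift g)$i" for i
      unfolding matrix_vector_mult_def N1_def using gk by (auto simp: plift_def intro!: sum.cong)
    then show ?thesis by (simp add: vec_eq_iff)
  qed
  also have "\<dots> = [:-lam, 1:] *s plift g" unfolding N_def by (rule pmat_eigen[OF Hg])
  finally have 2: "(plift g)$m * det N1 = [:-lam, 1:] * det (\<chi> i j. if j = m then (plift g)$i else N1$i$j)"
    by (rule eig_col)
  have fin: "[:e$k * g$m:] * det N = [:-lam, 1:]^2 * det (\<chi> i j. if j = m then (plift g)$i else N1$i$j)"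
  proof -
    have "[:e$k * g$m:] * det N = (plift g)$m * ((plift e)$k * det N)" by (simp add: plift_def)
    also have "\<dots> = (plift g)$m * ([:-lam, 1:] * det N1)" unfolding 1 ..
    also have "\<dots> = [:-lam, 1:] * ((plift g)$m * det N1)" by (simp only: mult.left_commute)
    also have "\<dots> = [:-lam, 1:]^2 * det (\<chi> i j. if j = m then (plift g)$i else N1$i$j)"
      unfolding 2 by (simp only: power2_eq_square mult.assoc)
    finally show ?thesis .
  qed
  have nz: "e$k * g$m \<noteq> 0" using k m by simp
  show ?thesis unfolding charpoly_pmat N_def[symmetric] by (rule const_dvd_cancel[OF nz fin])
qed

lemma sym_inner:
  fixes H :: "real^'n^'n"
  assumes "transpose H = H"
  shows "x \<bullet> (H *v y) = y \<bullet> (H *v x)"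
proof -
  have "x \<bullet> (H *v y) = (x v* H) \<bullet> y" by (simp add: dot_lmul_matrix)
  also have "x v* H = H *v x" using transpose_matrix_vector[of H x] assms by simp
  finally show ?thesis by (simp add: inner_commute)
qed

lemma quad_add:
  fixes H :: "real^'n^'n"
  assumes "transpose H = H"
  shows "(a + b) \<bullet> (H *v (a + b)) = a \<bullet> (H *v a) + 2 * (b \<bullet> (H *v a)) + b \<bullet> (H *v b)"
  using sym_inner[OF assms, of a b] by (simp add: matrix_vector_right_distrib inner_add_left inner_add_right)

lemma quad_scale:
  fixes H :: "real^'n^'n"
  shows "(c *\<^sub>R a) \<bullet> (H *v (c *\<^sub>R a)) = c^2 * (a \<bullet> (H *v a))"
  by (simp add: matrix_vector_mult_scaleR power2_eq_square)

lemma lin_quad_nonneg: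
  fixes a b :: real
  assumes "\<And>t. a * t + b * t^2 \<ge> 0"
  shows "a = 0"
proof (rule ccontr)
  assume a: "a \<noteq> 0"
  define k where "k = \<bar>b\<bar> + 1"
  have pos: "k > 0" "b < k" unfolding k_def by auto
  define t where "t = - a / k"
  have "a * t + b * t^2 = a^2 * (b - k) / k^2"
    unfolding t_def using pos by (simp add: field_simps power2_eq_square)
  also have "\<dots> < 0"
    using a pos by (intro divide_neg_pos mult_pos_neg) auto
  finally show False using assms[of t] by simp
qed

lemma min_eigen:
  fixes H :: "real^'n^'n"
  assumes sym: "transpose H = H" and n1: "norm e = 1" and eu: "e \<bullet> u = 0"
    and Hu: "H *v u = c *\<^sub>R u"
    and min: "\<And>x. norm x = 1 \<Longrightarrow> x \<bullet> u = 0 \<Longrightarrow> e \<bullet> (H *v e) \<le> x \<bullet> (H *v x)"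
  shows "H *v e = (e \<bullet> (H *v e)) *\<^sub>R e"
proof -
  define lam where "lam = e \<bullet> (H *v e)"
  define r where "r = H *v e - lam *\<^sub>R e"
  have ge: "x \<bullet> (H *v x) \<ge> lam * (norm x)^2" if "x \<bullet> u = 0" for x
  proof (cases "x = 0")
    case True then show ?thesis by simp
  next
    case False
    then have nx: "norm x > 0" by simp
    have "lam \<le> (x /\<^sub>R norm x) \<bullet> (H *v (x /\<^sub>R norm x))"
      unfolding lam_def using nx that by (intro min) (auto simp: inner_commute)
    also have "\<dots> = (x \<bullet> (H *v x)) / (norm x)^2"
      using quad_scale[of "inverse (norm x)" x H] by (simp add: field_simps power2_eq_square)
    finally show ?thesis using nx by (simp add: field_simps)
  qed
  have rd: "r \<bullet> d = 0" if du: "d \<bullet> u = 0" for d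
  proof -
    have "(d \<bullet> (H *v e) - lam * (e \<bullet> d)) * (2 * t) + (d \<bullet> (H *v d) - lam * (norm d)^2) * t^2 \<ge> 0" for t
    proof -
      have "(e + t *\<^sub>R d) \<bullet> u = 0" using eu du by (simp add: inner_add_left)
      then have "(e + t *\<^sub>R d) \<bullet> (H *v (e + t *\<^sub>R d)) \<ge> lam * (norm (e + t *\<^sub>R d))^2"
        by (rule ge)
      moreover have "(e + t *\<^sub>R d) \<bullet> (H *v (e + t *\<^sub>R d)) = lam + 2 * t * (d \<bullet> (H *v e)) + t^2 * (d \<bullet> (H *v d))"
        unfolding quad_add[OF sym] quad_scale lam_def
        by (simp add: scaleR_matrix_vector_assoc[symmetric])
      moreover have "(norm (e + t *\<^sub>R d))^2 = 1 + 2 * t * (e \<bullet> d) + t^2 * (norm d)^2"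
      proof -
        have "(norm (e + t *\<^sub>R d))^2 = (e + t *\<^sub>R d) \<bullet> (e + t *\<^sub>R d)" by (rule power2_norm_eq_inner)
        also have "\<dots> = e \<bullet> e + 2 * t * (e \<bullet> d) + t^2 * (d \<bullet> d)"
          by (simp add: inner_add_left inner_add_right inner_commute power2_eq_square algebra_simps)
        also have "e \<bullet> e = 1" using n1 by (simp add: power2_norm_eq_inner[symmetric])
        also have "d \<bullet> d = (norm d)^2" by (simp add: power2_norm_eq_inner)
        finally show ?thesis .
      qed
      ultimately show ?thesis by (simp add: algebra_simps)
    qed
    then have "(d \<bullet> (H *v e) - lam * (e \<bullet> d)) * 2 = 0"
      using lin_quad_nonneg[of "(d \<bullet> (H *v e) - lam * (e \<bullet> d)) * 2" "d \<bullet> (H *v d) - lam * (norm d)^2"]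
      by (simp add: algebra_simps)
    then show ?thesis unfolding r_def by (simp add: inner_diff_left inner_commute algebra_simps)
  qed
  have ru: "r \<bullet> u = 0"
  proof -
    have "(H *v e) \<bullet> u = e \<bullet> (H *v u)" using sym_inner[OF sym, of u e] by (simp add: inner_commute)
    then show ?thesis unfolding r_def using Hu eu by (simp add: inner_diff_left)
  qed
  have "r \<bullet> r = 0"
  proof (cases "u = 0")
    case True then show ?thesis using rd by simp
  next
    case False
    define d where "d = r - ((r \<bullet> u) / (u \<bullet> u)) *\<^sub>R u"
    have "d \<bullet> u = 0" using False by (simp add: d_def inner_diff_left)
    then have "r \<bullet> d = 0" by (rule rd)
    then show ?thesis using ru by (simp add: d_def inner_diff_right inner_commute)
  qed
  then show ?thesis unfolding r_def lam_def by simp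
qed

lemma det_nz_kernel:
  fixes H :: "real^'n^'n"
  assumes "det H \<noteq> 0" "H *v x = 0"
  shows "x = 0"
proof -
  have "invertible H" using assms(1) by (simp add: invertible_det_nz)
  then obtain B where B: "B ** H = mat 1" unfolding invertible_def by blast
  have "x = (B ** H) *v x" using B by simp
  also have "\<dots> = B *v (H *v x)" by (simp add: matrix_vector_mul_assoc)
  finally show ?thesis using assms(2) by simp
qed

lemma quad_min_exists:
  fixes H :: "real^'n^'n"
  assumes "\<exists>x. norm x = 1 \<and> x \<bullet> u = 0"
  shows "\<exists>e. norm e = 1 \<and> e \<bullet> u = 0 \<and> (\<forall>x. norm x = 1 \<and> x \<bullet> u = 0 \<longrightarrow> e \<bullet> (H *v e) \<le> x \<bullet> (H *v x))"
proof -
  define S where "S = sphere (0::real^'n) 1 \<inter> {x. u \<bullet> x = 0}"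
  have "compact S" unfolding S_def by (intro compact_Int_closed compact_sphere closed_hyperplane)
  moreover have "S \<noteq> {}" using assms by (auto simp: S_def inner_commute)
  moreover have "continuous_on S (\<lambda>x. x \<bullet> (H *v x))" by (intro continuous_intros)
  ultimately obtain e where "e \<in> S" "\<forall>x\<in>S. e \<bullet> (H *v e) \<le> x \<bullet> (H *v x)"
    using continuous_attains_inf by blast
  then show ?thesis by (auto simp: S_def inner_commute)
qed

lemma signature:
  fixes H :: "real^'n^'n"
  assumes sym: "transpose H = H" and dH: "det H \<noteq> 0" and neg: "num_neg_eigenvalues H = 1"
    and w: "w \<bullet> (H *v w) < 0" and y0: "y \<noteq> 0" and yw: "y \<bullet> (H *v w) = 0"
  shows "y \<bullet> (H *v y) > 0"
proof (rule ccontr)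
  assume "\<not> ?thesis"
  then have qy: "y \<bullet> (H *v y) \<le> 0" by simp
  have qcomb: "(a *\<^sub>R w + b *\<^sub>R y) \<bullet> (H *v (a *\<^sub>R w + b *\<^sub>R y)) \<le> 0" for a b
  proof -
    have "(a *\<^sub>R w + b *\<^sub>R y) \<bullet> (H *v (a *\<^sub>R w + b *\<^sub>R y)) = a^2 * (w \<bullet> (H *v w)) + b^2 * (y \<bullet> (H *v y))"
      unfolding quad_add[OF sym] quad_scale using yw by (simp add: matrix_vector_mult_scaleR)
    also have "\<dots> \<le> 0" using w qy by (intro add_nonpos_nonpos mult_nonneg_nonpos) auto
    finally show ?thesis .
  qed
  have w0: "w \<noteq> 0" using w by auto
  obtain e1 where e1: "norm e1 = 1" and e1min: "\<And>x. norm x = 1 \<Longrightarrow> e1 \<bullet> (H *v e1) \<le> x \<bullet> (H *v x)"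
  proof -
    have "\<exists>x::real^'n. norm x = 1 \<and> x \<bullet> 0 = 0" by (rule exI[of _ "axis undefined 1"]) simp
    from quad_min_exists[OF this, of H] that show ?thesis by auto
  qed
  define l1 where "l1 = e1 \<bullet> (H *v e1)"
  have He1: "H *v e1 = l1 *\<^sub>R e1"
    unfolding l1_def by (rule min_eigen[OF sym e1, of 0 0]) (auto intro: e1min)
  have l1neg: "l1 < 0"
  proof -
    have "l1 \<le> (w /\<^sub>R norm w) \<bullet> (H *v (w /\<^sub>R norm w))" unfolding l1_def using w0 by (intro e1min) simp
    also have "\<dots> = (inverse (norm w))^2 * (w \<bullet> (H *v w))" by (rule quad_scale)
    also have "\<dots> < 0" using w w0 by (intro mult_pos_neg) auto
    finally show ?thesis .
  qed
  obtain z where z0: "z \<noteq> 0" and ze1: "z \<bullet> e1 = 0" and qz: "z \<bullet> (H *v z) \<le> 0"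
  proof (cases "w \<bullet> e1 = 0")
    case True
    then show ?thesis using that[of w] w0 w by simp
  next
    case False
    define z where "z = (y \<bullet> e1) *\<^sub>R w + (- (w \<bullet> e1)) *\<^sub>R y"
    have "z \<noteq> 0"
    proof
      assume "z = 0"
      then have "(w \<bullet> e1) *\<^sub>R y = (y \<bullet> e1) *\<^sub>R w" by (simp add: z_def algebra_simps)
      then have yc: "y = ((y \<bullet> e1) / (w \<bullet> e1)) *\<^sub>R w" using False
        by (metis (no_types, lifting) divide_inverse_commute scaleR_scaleR eq_vector_fraction_iff)
      have "y \<bullet> (H *v w) = ((y \<bullet> e1) / (w \<bullet> e1)) * (w \<bullet> (H *v w))" by (subst yc) simp
      then have "(y \<bullet> e1) / (w \<bullet> e1) = 0" using yw w by simp
      then show False using yc y0 by (metis scale_zero_left)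
    qed
    moreover have "z \<bullet> e1 = 0" by (simp add: z_def inner_add_left algebra_simps)
    moreover have "z \<bullet> (H *v z) \<le> 0" unfolding z_def by (rule qcomb)
    ultimately show ?thesis using that by blast
  qed
  have "\<exists>x. norm x = 1 \<and> x \<bullet> e1 = 0"
    using z0 ze1 by (intro exI[of _ "z /\<^sub>R norm z"]) auto
  then obtain e2 where e2: "norm e2 = 1" and e2e1: "e2 \<bullet> e1 = 0"
    and e2min: "\<And>x. norm x = 1 \<Longrightarrow> x \<bullet> e1 = 0 \<Longrightarrow> e2 \<bullet> (H *v e2) \<le> x \<bullet> (H *v x)"
    using quad_min_exists[of e1 H] by blast
  define l2 where "l2 = e2 \<bullet> (H *v e2)"
  have He2: "H *v e2 = l2 *\<^sub>R e2"
    unfolding l2_def by (rule min_eigen[OF sym e2 e2e1 He1]) (auto intro: e2min)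
  have l2le: "l2 \<le> 0"
  proof -
    have "l2 \<le> (z /\<^sub>R norm z) \<bullet> (H *v (z /\<^sub>R norm z))" unfolding l2_def using z0 ze1 by (intro e2min) auto
    also have "\<dots> = (inverse (norm z))^2 * (z \<bullet> (H *v z))" by (rule quad_scale)
    also have "\<dots> \<le> 0" using qz by (intro mult_nonneg_nonpos) auto
    finally show ?thesis .
  qed
  have e20: "e2 \<noteq> 0" using e2 by auto
  have "l2 \<noteq> 0"
  proof
    assume "l2 = 0"
    then have "H *v e2 = 0" using He2 by simp
    then show False using det_nz_kernel[OF dH] e20 by blast
  qed
  with l2le have l2neg: "l2 < 0" by simp
  have e10: "e1 \<noteq> 0" using e1 by auto
  define p where "p = charpoly H"
  define R where "R = {e. e < 0 \<and> poly p e = 0}"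
  have sumR: "(\<Sum>e\<in>R. order e p) = 1" using neg unfolding num_neg_eigenvalues_def p_def R_def .
  have p0: "p \<noteq> 0"
  proof
    assume "p = 0"
    then have "R = {e. e < 0}" by (simp add: R_def)
    moreover have "infinite {e::real. e < 0}"
    proof
      assume "finite {e::real. e < 0}"
      moreover have "{-1<..<0::real} \<subseteq> {e. e < 0}" by auto
      ultimately have "finite {-1<..<0::real}" by (rule finite_subset[rotated])
      then show False using infinite_Ioo[of "-1" "0::real"] by simp
    qed
    ultimately show False using sumR by simp
  qed
  have finR: "finite R" unfolding R_def using poly_roots_finite[OF p0] by (auto intro: finite_subset)
  have d1: "[:-l1, 1:] dvd p" unfolding p_def by (rule charpoly_order1[OF He1 e10])
  have d2: "[:-l2, 1:] dvd p" unfolding p_def by (rule charpoly_order1[OF He2 e20])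
  have l1R: "l1 \<in> R" using d1 l1neg by (simp add: R_def poly_eq_0_iff_dvd)
  have l2R: "l2 \<in> R" using d2 l2neg by (simp add: R_def poly_eq_0_iff_dvd)
  have o1: "1 \<le> order l1 p" using d1 p0 order_divides[of l1 1 p] by simp
  have o2: "1 \<le> order l2 p" using d2 p0 order_divides[of l2 1 p] by simp
  show False
  proof (cases "l1 = l2")
    case True
    have nm: "e2 \<noteq> c *\<^sub>R e1" for c
    proof
      assume eq: "e2 = c *\<^sub>R e1"
      then have "c * (e1 \<bullet> e1) = 0" using e2e1 by simp
      then have "c = 0" using e10 by simp
      then show False using eq e20 by simp
    qed
    have "[:-l1, 1:]^2 dvd p" unfolding p_def
      by (rule charpoly_order2[OF He1 e10]) (use He2 True nm in auto)
    then have "2 \<le> order l1 p" using p0 order_divides[of l1 2 p] by simp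
    moreover have "order l1 p \<le> (\<Sum>e\<in>R. order e p)" using finR l1R by (intro member_le_sum) auto
    ultimately show False using sumR by simp
  next
    case False
    have "(\<Sum>e\<in>{l1, l2}. order e p) \<le> (\<Sum>e\<in>R. order e p)"
      using finR l1R l2R by (intro sum_mono2) auto
    moreover have "(\<Sum>e\<in>{l1, l2}. order e p) = order l1 p + order l2 p" using False by simp
    ultimately show False using sumR o1 o2 by simp
  qed
qed

lemma dir_deriv:
  fixes U :: "real^'n \<Rightarrow> real"
  assumes diff: "\<And>x. U differentiable (at x)"
  shows "((\<lambda>t. U (c + t *\<^sub>R e)) has_real_derivative (frechet_derivative U (at (c + t *\<^sub>R e)) e)) (at t)"
proof -
  have 1: "((\<lambda>t. c + t *\<^sub>R e) has_derivative (\<lambda>s. s *\<^sub>R e)) (at t)"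
    by (auto intro!: derivative_eq_intros)
  have 2: "(U has_derivative frechet_derivative U (at (c + t *\<^sub>R e))) (at (c + t *\<^sub>R e))"
    using diff frechet_derivative_works by blast
  have lin: "linear (frechet_derivative U (at (c + t *\<^sub>R e)))"
    using 2 has_derivative_linear by blast
  have "((\<lambda>t. U (c + t *\<^sub>R e)) has_derivative (frechet_derivative U (at (c + t *\<^sub>R e)) \<circ> (\<lambda>s. s *\<^sub>R e))) (at t)"
    using diff_chain_at[OF 1, of U] 2 by (simp add: o_def)
  moreover have "(frechet_derivative U (at (c + t *\<^sub>R e)) \<circ> (\<lambda>s. s *\<^sub>R e)) = (\<lambda>s. (frechet_derivative U (at (c + t *\<^sub>R e)) e) * s)"
    using linear_scale[OF lin] by (auto simp: o_def mult.commute)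
  ultimately show ?thesis by (simp add: has_field_derivative_def)
qed

lemma grad_comp: "grad U x $ j = frechet_derivative U (at x) (axis j 1)"
  by (simp add: grad_def)

lemma clairaut_half:
  fixes U :: "real^'n \<Rightarrow> real" and H :: "real^'n^'n"
  assumes diff: "\<And>x. U differentiable (at x)"
    and D: "(grad U has_derivative (\<lambda>p. H *v p)) (at \<sigma>)" and eps: "\<epsilon> > 0"
  shows "\<exists>\<delta>>0. \<forall>h. 0 < h \<and> h < \<delta> \<longrightarrow>
    \<bar>U (\<sigma> + h *\<^sub>R axis i 1 + h *\<^sub>R axis j 1) - U (\<sigma> + h *\<^sub>R axis j 1) - U (\<sigma> + h *\<^sub>R axis i 1) + U \<sigma>
      - h^2 * H$j$i\<bar> \<le> 3 * \<epsilon> * h^2"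
proof -
  obtain d0 where d0: "d0 > 0" and est: "\<And>y. norm (y - \<sigma>) < d0 \<Longrightarrow>
      norm (grad U y - grad U \<sigma> - H *v (y - \<sigma>)) \<le> \<epsilon> * norm (y - \<sigma>)"
    using D eps unfolding has_derivative_at_alt by blast
  have estj: "\<bar>grad U y $ j - grad U \<sigma> $ j - (H *v (y - \<sigma>)) $ j\<bar> \<le> \<epsilon> * norm (y - \<sigma>)"
    if "norm (y - \<sigma>) < d0" for y
    using est[OF that] component_le_norm_cart[of "grad U y - grad U \<sigma> - H *v (y - \<sigma>)" j]
    by simp
  show ?thesis
  proof (intro exI[of _ "d0 / 2"] conjI allI impI)
    show "d0 / 2 > 0" using d0 by simp
    fix h :: real assume h: "0 < h \<and> h < d0 / 2"
    let ?ei = "axis i (1::real) :: real^'n" and ?ej = "axis j (1::real) :: real^'n"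
    define \<phi> where "\<phi> t = U (\<sigma> + h *\<^sub>R ?ei + t *\<^sub>R ?ej) - U (\<sigma> + t *\<^sub>R ?ej)" for t
    define \<phi>' where "\<phi>' t = grad U (\<sigma> + h *\<^sub>R ?ei + t *\<^sub>R ?ej) $ j - grad U (\<sigma> + t *\<^sub>R ?ej) $ j" for t
    have der: "(\<phi> has_real_derivative \<phi>' t) (at t)" for t
      unfolding \<phi>_def \<phi>'_def grad_comp
      by (intro derivative_intros dir_deriv[OF diff])
    obtain \<xi> where \<xi>: "0 < \<xi>" "\<xi> < h" and mvt: "\<phi> h - \<phi> 0 = (h - 0) * \<phi>' \<xi>"
      using MVT2[of 0 h \<phi> \<phi>'] der h by auto
    define y1 where "y1 = \<sigma> + h *\<^sub>R ?ei + \<xi> *\<^sub>R ?ej"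
    define y2 where "y2 = \<sigma> + \<xi> *\<^sub>R ?ej"
    have n1: "norm (y1 - \<sigma>) \<le> 2 * h"
    proof -
      have "norm (y1 - \<sigma>) = norm (h *\<^sub>R ?ei + \<xi> *\<^sub>R ?ej)" by (simp add: y1_def)
      also have "\<dots> \<le> norm (h *\<^sub>R ?ei) + norm (\<xi> *\<^sub>R ?ej)" by (rule norm_triangle_ineq)
      also have "\<dots> = h + \<xi>" using h \<xi> by simp
      finally show ?thesis using \<xi> by simp
    qed
    have n2: "norm (y2 - \<sigma>) \<le> h" using \<xi> by (simp add: y2_def)
    have e1: "\<bar>grad U y1 $ j - grad U \<sigma> $ j - (H *v (y1 - \<sigma>)) $ j\<bar> \<le> \<epsilon> * (2 * h)"
    proof -
      have "norm (y1 - \<sigma>) < d0" using n1 h by linarith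
      then have "\<bar>grad U y1 $ j - grad U \<sigma> $ j - (H *v (y1 - \<sigma>)) $ j\<bar> \<le> \<epsilon> * norm (y1 - \<sigma>)" by (rule estj)
      also have "\<dots> \<le> \<epsilon> * (2 * h)" using n1 eps by (intro mult_left_mono) auto
      finally show ?thesis .
    qed
    have e2: "\<bar>grad U y2 $ j - grad U \<sigma> $ j - (H *v (y2 - \<sigma>)) $ j\<bar> \<le> \<epsilon> * h"
    proof -
      have "norm (y2 - \<sigma>) < d0" using n2 h by linarith
      then have "\<bar>grad U y2 $ j - grad U \<sigma> $ j - (H *v (y2 - \<sigma>)) $ j\<bar> \<le> \<epsilon> * norm (y2 - \<sigma>)" by (rule estj)
      also have "\<dots> \<le> \<epsilon> * h" using n2 eps by (intro mult_left_mono) auto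
      finally show ?thesis .
    qed
    have Hdiff: "(H *v (y1 - \<sigma>)) $ j - (H *v (y2 - \<sigma>)) $ j = h * H$j$i"
    proof -
      have eq: "(y1 - \<sigma>) - (y2 - \<sigma>) = h *\<^sub>R ?ei" by (simp add: y1_def y2_def)
      have "H *v (y1 - \<sigma>) - H *v (y2 - \<sigma>) = H *v ((y1 - \<sigma>) - (y2 - \<sigma>))"
        by (simp only: matrix_vector_mult_diff_distrib)
      also have "\<dots> = H *v (h *\<^sub>R ?ei)" by (simp only: eq)
      also have "\<dots> = h *\<^sub>R column i H" by (simp only: matrix_vector_mult_scaleR matrix_vector_mult_basis)
      finally have "(H *v (y1 - \<sigma>) - H *v (y2 - \<sigma>)) $ j = h * H$j$i" by (simp add: column_def)
      then show ?thesis by simp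
    qed
    have "\<phi>' \<xi> - h * H$j$i = (grad U y1 $ j - grad U \<sigma> $ j - (H *v (y1 - \<sigma>)) $ j)
        - (grad U y2 $ j - grad U \<sigma> $ j - (H *v (y2 - \<sigma>)) $ j)"
      using Hdiff unfolding \<phi>'_def y1_def y2_def by simp
    then have A: "\<bar>\<phi>' \<xi> - h * H$j$i\<bar> \<le> 3 * \<epsilon> * h" using e1 e2 by linarith
    have B:  "U (\<sigma> + h *\<^sub>R ?ei + h *\<^sub>R ?ej) - U (\<sigma> + h *\<^sub>R ?ej) - U (\<sigma> + h *\<^sub>R ?ei) + U \<sigma>
        - h^2 * H$j$i = h * (\<phi>' \<xi> - h * H$j$i)"
      using mvt unfolding \<phi>_def by (simp add: power2_eq_square algebra_simps)
    from A show "\<bar>U (\<sigma> + h *\<^sub>R ?ei + h *\<^sub>R ?ej) - U (\<sigma> + h *\<^sub>R ?ej) - U (\<sigma> + h *\<^sub>R ?ei) + U \<sigma>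
        - h^2 * H$j$i\<bar> \<le> 3 * \<epsilon> * h^2"
    proof -
      assume a: "\<bar>\<phi>' \<xi> - h * H$j$i\<bar> \<le> 3 * \<epsilon> * h"
      have "\<bar>h * (\<phi>' \<xi> - h * H$j$i)\<bar> = h * \<bar>\<phi>' \<xi> - h * H$j$i\<bar>" using h by (simp add: abs_mult)
      also have "\<dots> \<le> h * (3 * \<epsilon> * h)" using a h by (intro mult_left_mono) auto
      finally have "\<bar>h * (\<phi>' \<xi> - h * H$j$i)\<bar> \<le> 3 * \<epsilon> * h^2" by (simp add: power2_eq_square algebra_simps)
      then show ?thesis by (simp only: B)
    qed
  qed
qed

lemma hess_sym_entry:
  fixes U :: "real^'n \<Rightarrow> real" and H :: "real^'n^'n"
  assumes diff: "\<And>x. U differentiable (at x)"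
    and D: "(grad U has_derivative (\<lambda>p. H *v p)) (at \<sigma>)"
  shows "H$i$j = H$j$i"
proof (rule ccontr)
  assume ne: "H$i$j \<noteq> H$j$i"
  define \<epsilon> where "\<epsilon> = \<bar>H$j$i - H$i$j\<bar> / 12"
  have eps: "\<epsilon> > 0" using ne by (simp add: \<epsilon>_def)
  obtain d1 where d1: "d1 > 0" and c1: "\<And>h. 0 < h \<and> h < d1 \<Longrightarrow>
    \<bar>U (\<sigma> + h *\<^sub>R axis i 1 + h *\<^sub>R axis j 1) - U (\<sigma> + h *\<^sub>R axis j 1) - U (\<sigma> + h *\<^sub>R axis i 1) + U \<sigma>
      - h^2 * H$j$i\<bar> \<le> 3 * \<epsilon> * h^2"
    using clairaut_half[OF diff D eps, of i j] by blast
  obtain d2 where d2: "d2 > 0" and c2: "\<And>h. 0 < h \<and> h < d2 \<Longrightarrow>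
    \<bar>U (\<sigma> + h *\<^sub>R axis j 1 + h *\<^sub>R axis i 1) - U (\<sigma> + h *\<^sub>R axis i 1) - U (\<sigma> + h *\<^sub>R axis j 1) + U \<sigma>
      - h^2 * H$i$j\<bar> \<le> 3 * \<epsilon> * h^2"
    using clairaut_half[OF diff D eps, of j i] by blast
  define h where "h = min d1 d2 / 2"
  have h: "0 < h" "h < d1" "h < d2" using d1 d2 by (auto simp: h_def)
  define \<Delta> where "\<Delta> = U (\<sigma> + h *\<^sub>R axis i 1 + h *\<^sub>R axis j 1) - U (\<sigma> + h *\<^sub>R axis j 1) - U (\<sigma> + h *\<^sub>R axis i 1) + U \<sigma>"
  have sw: "\<sigma> + h *\<^sub>R axis j 1 + h *\<^sub>R axis i 1 = \<sigma> + h *\<^sub>R axis i 1 + h *\<^sub>R axis j 1"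
    by (simp add: algebra_simps)
  have A: "\<bar>\<Delta> - h^2 * H$j$i\<bar> \<le> 3 * \<epsilon> * h^2" using c1 h unfolding \<Delta>_def by blast
  have B: "\<bar>\<Delta> - h^2 * H$i$j\<bar> \<le> 3 * \<epsilon> * h^2" using c2[of h] h unfolding \<Delta>_def sw by simp
  have eq: "(\<Delta> - h^2 * H$i$j) - (\<Delta> - h^2 * H$j$i) = h^2 * (H$j$i - H$i$j)" by (simp add: algebra_simps)
  have "h^2 * \<bar>H$j$i - H$i$j\<bar> = \<bar>h^2 * (H$j$i - H$i$j)\<bar>" by (simp add: abs_mult)
  also have "\<dots> = \<bar>(\<Delta> - h^2 * H$i$j) - (\<Delta> - h^2 * H$j$i)\<bar>" by (simp only: eq)
  also have "\<dots> \<le> 6 * \<epsilon> * h^2" using A B by linarith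
  finally have "h^2 * \<bar>H$j$i - H$i$j\<bar> \<le> h^2 * (6 * \<epsilon>)" by (simp add: algebra_simps)
  then have "\<bar>H$j$i - H$i$j\<bar> \<le> 6 * \<epsilon>" using h by simp
  then show False using eps unfolding \<epsilon>_def by simp
qed

lemma line_deriv:
  fixes f :: "real^'n \<Rightarrow> real^'m"
  assumes "(f has_derivative (\<lambda>p. A *v p)) (at \<sigma>)"
  shows "((\<lambda>t. f (\<sigma> + t *\<^sub>R d)) has_derivative (\<lambda>t. t *\<^sub>R (A *v d))) (at 0)"
proof -
  have 1: "((\<lambda>t. \<sigma> + t *\<^sub>R d) has_derivative (\<lambda>s. s *\<^sub>R d)) (at (0::real))"
    by (auto intro!: derivative_eq_intros)
  have "((\<lambda>t. f (\<sigma> + t *\<^sub>R d)) has_derivative ((\<lambda>p. A *v p) \<circ> (\<lambda>s. s *\<^sub>R d))) (at 0)"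
    using diff_chain_at[OF 1, of f] assms by (simp add: o_def)
  then show ?thesis by (simp add: o_def matrix_vector_mult_scaleR)
qed

lemma lim_quot:
  fixes G :: "real \<Rightarrow> real^'m"
  assumes "(G has_derivative (\<lambda>t. t *\<^sub>R D)) (at 0)" "G 0 = 0"
  shows "((\<lambda>t. G t /\<^sub>R t) \<longlongrightarrow> D) (at 0)"
proof -
  have "((\<lambda>y. norm (G y - G 0 - y *\<^sub>R D) / norm (y - 0)) \<longlongrightarrow> 0) (at 0)"
    using assms(1) unfolding has_derivative_iff_norm by simp
  moreover have "\<forall>\<^sub>F y in at 0. norm (G y - G 0 - y *\<^sub>R D) / norm (y - 0) = norm (G y /\<^sub>R y - D)"
  proof (rule eventually_at_topological[THEN iffD2], intro exI[of _ UNIV] conjI ballI impI)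
    fix y :: real assume "y \<noteq> 0"
    then have "G y /\<^sub>R y - D = (G y - y *\<^sub>R D) /\<^sub>R y" by (simp add: algebra_simps)
    then have "norm (G y /\<^sub>R y - D) = norm (G y - y *\<^sub>R D) / \<bar>y\<bar>" by (simp add: divide_inverse_commute)
    then show "norm (G y - G 0 - y *\<^sub>R D) / norm (y - 0) = norm (G y /\<^sub>R y - D)" using assms(2) by simp
  qed auto
  ultimately have "((\<lambda>y. norm (G y /\<^sub>R y - D)) \<longlongrightarrow> 0) (at 0)" by (rule Lim_transform_eventually)
  then have "((\<lambda>y. G y /\<^sub>R y - D) \<longlongrightarrow> 0) (at 0)" by (simp only: tendsto_norm_zero_iff)
  then show ?thesis by (simp only: Lim_null[symmetric])
qed

lemma skew_prop:
  fixes g ell :: "real^'n \<Rightarrow> real^'n" and H L :: "real^'n^'n"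
  assumes orth: "\<And>x. g x \<bullet> ell x = 0" and g0: "g \<sigma> = 0"
    and Dg: "(g has_derivative (\<lambda>p. H *v p)) (at \<sigma>)"
    and Dl: "(ell has_derivative (\<lambda>p. L *v p)) (at \<sigma>)"
    and dH: "det H \<noteq> 0"
  shows "(H *v d) \<bullet> (L *v d) = 0"
proof -
  have limG: "((\<lambda>t. g (\<sigma> + t *\<^sub>R d) /\<^sub>R t) \<longlongrightarrow> H *v d) (at 0)" for d
    by (rule lim_quot[OF line_deriv[OF Dg]]) (simp add: g0)
  have l0: "ell \<sigma> = 0"
  proof -
    have ort: "(H *v d) \<bullet> ell \<sigma> = 0" for d
    proof -
      have "continuous (at 0) (\<lambda>t. ell (\<sigma> + t *\<^sub>R d))"
        using line_deriv[OF Dl] by (rule has_derivative_continuous)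
      then have limE: "((\<lambda>t. ell (\<sigma> + t *\<^sub>R d)) \<longlongrightarrow> ell \<sigma>) (at 0)"
        by (simp add: continuous_at)
      have "((\<lambda>t. (g (\<sigma> + t *\<^sub>R d) /\<^sub>R t) \<bullet> ell (\<sigma> + t *\<^sub>R d)) \<longlongrightarrow> (H *v d) \<bullet> ell \<sigma>) (at 0)"
        by (intro tendsto_inner limG limE)
      moreover have "(\<lambda>t. (g (\<sigma> + t *\<^sub>R d) /\<^sub>R t) \<bullet> ell (\<sigma> + t *\<^sub>R d)) = (\<lambda>t. 0)"
        using orth by (simp add: inner_scaleR_left)
      ultimately have "((\<lambda>t. 0::real) \<longlongrightarrow> (H *v d) \<bullet> ell \<sigma>) (at (0::real))" by simp
      then show ?thesis using LIM_unique[OF _ tendsto_const] by blast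
    qed
    have "invertible H" using dH by (simp add: invertible_det_nz)
    then obtain B where B: "H ** B = mat 1" unfolding invertible_def by blast
    have "H *v (B *v ell \<sigma>) = ell \<sigma>" using B by (simp add: matrix_vector_mul_assoc)
    then have "ell \<sigma> \<bullet> ell \<sigma> = 0" using ort[of "B *v ell \<sigma>"] by simp
    then show ?thesis by simp
  qed
  have limL: "((\<lambda>t. ell (\<sigma> + t *\<^sub>R d) /\<^sub>R t) \<longlongrightarrow> L *v d) (at 0)"
    by (rule lim_quot[OF line_deriv[OF Dl]]) (simp add: l0)
  have "((\<lambda>t. (g (\<sigma> + t *\<^sub>R d) /\<^sub>R t) \<bullet> (ell (\<sigma> + t *\<^sub>R d) /\<^sub>R t)) \<longlongrightarrow> (H *v d) \<bullet> (L *v d)) (at 0)"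
    by (intro tendsto_inner limG limL)
  moreover have "(\<lambda>t. (g (\<sigma> + t *\<^sub>R d) /\<^sub>R t) \<bullet> (ell (\<sigma> + t *\<^sub>R d) /\<^sub>R t)) = (\<lambda>t. 0)"
    using orth by (simp add: inner_scaleR_left inner_scaleR_right)
  ultimately have "((\<lambda>t. 0::real) \<longlongrightarrow> (H *v d) \<bullet> (L *v d)) (at (0::real))" by simp
  then show ?thesis using LIM_unique[OF _ tendsto_const] by blast
qed

lemma outer_mult: "outer v v *v x = (v \<bullet> x) *\<^sub>R (v::real^'n)"
  by (simp add: vec_eq_iff outer_def matrix_vector_mult_def inner_vec_def sum_distrib_left algebra_simps)

lemma det_rank1_outer:
  fixes H :: "real^'n^'n"
  shows "det (H + c *\<^sub>R outer v v) = det H + c * (\<Sum>k\<in>UNIV. v$k * det (\<chi> i. if i = k then v else row i H))"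
proof -
  have "H + c *\<^sub>R outer v v = (\<chi> i. row i H + (c *\<^sub>R v)$i *s v)"
    by (simp add: vec_eq_iff outer_def row_def)
  then show ?thesis using det_rank1[of H "c *\<^sub>R v" v] by (simp add: sum_distrib_left algebra_simps)
qed

lemma main_linalg:
  fixes H L :: "real^'n^'n" and v :: "real^'n" and \<mu> :: real
  assumes sym: "transpose H = H" and dH: "det H \<noteq> 0" and neg: "num_neg_eigenvalues H = 1"
    and mu: "\<mu> > 0" and skew: "\<And>d. (H *v d) \<bullet> (L *v d) = 0"
    and eig: "(H - transpose L) *v v = (- \<mu>) *\<^sub>R v" and nv: "norm v = 1"
  shows "transpose (H + (2 * \<mu>) *\<^sub>R outer v v) = H + (2 * \<mu>) *\<^sub>R outer v v
       \<and> (\<forall>x. x \<noteq> 0 \<longrightarrow> x \<bullet> ((H + (2 * \<mu>) *\<^sub>R outer v v) *v x) > 0)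
       \<and> det (H + (2 * \<mu>) *\<^sub>R outer v v) = - det H
       \<and> transpose (H + \<mu> *\<^sub>R outer v v) = H + \<mu> *\<^sub>R outer v v
       \<and> (\<forall>x. x \<bullet> ((H + \<mu> *\<^sub>R outer v v) *v x) \<ge> 0)
       \<and> det (H + \<mu> *\<^sub>R outer v v) = 0
       \<and> {x. (H + \<mu> *\<^sub>R outer v v) *v x = 0} = span {matrix_inv H *v v}
       \<and> dim {x. (H + \<mu> *\<^sub>R outer v v) *v x = 0} = 1"
proof -
  have "invertible H" using dH by (simp add: invertible_det_nz)
  then have inv: "H ** matrix_inv H = mat 1 \<and> matrix_inv H ** H = mat 1"
    unfolding invertible_def matrix_inv_def by (rule someI_ex)
  define w where "w = matrix_inv H *v v"
  have Hw: "H *v w = v" unfolding w_def using inv by (simp add: matrix_vector_mul_assoc)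
  have v0: "v \<noteq> 0" using nv by auto
  have w0: "w \<noteq> 0" using Hw v0 by auto
  have symij: "H$i$j = H$j$i" for i j using sym by (metis transpose_def vec_lambda_beta)
  have vw: "v \<bullet> w = - 1 / \<mu>"
  proof -
    have e: "H *v v - transpose L *v v = (- \<mu>) *\<^sub>R v" using eig by (simp add: matrix_vector_mult_diff_rdistrib)
    have "w \<bullet> (H *v v) - w \<bullet> (transpose L *v v) = - \<mu> * (w \<bullet> v)"
      using arg_cong[OF e, of "\<lambda>z. w \<bullet> z"] by (simp add: inner_diff_right)
    moreover have "w \<bullet> (H *v v) = 1"
    proof -
      have "w \<bullet> (H *v v) = v \<bullet> (H *v w)" by (rule sym_inner[OF sym])
      also have "\<dots> = v \<bullet> v" using Hw by simp
      also have "\<dots> = 1" using nv by (simp add: power2_norm_eq_inner[symmetric])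
      finally show ?thesis .
    qed
    moreover have "w \<bullet> (transpose L *v v) = 0"
    proof -
      have "w \<bullet> (transpose L *v v) = (v v* L) \<bullet> w" by (simp add: inner_commute)
      also have "\<dots> = v \<bullet> (L *v w)" by (rule dot_lmul_matrix)
      also have "\<dots> = (H *v w) \<bullet> (L *v w)" using Hw by simp
      also have "\<dots> = 0" by (rule skew)
      finally show ?thesis .
    qed
    ultimately have "\<mu> * (w \<bullet> v) = -1" by simp
    then show ?thesis using mu by (simp add: field_simps inner_commute)
  qed
  have qw: "w \<bullet> (H *v w) = - 1 / \<mu>" using vw Hw by (simp add: inner_commute)
  have qwneg: "w \<bullet> (H *v w) < 0" using qw mu by simp
  have Mx: "(H + c *\<^sub>R outer v v) *v x = H *v x + (c * (v \<bullet> x)) *\<^sub>R v" for c x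
    by (simp add: matrix_vector_mult_add_rdistrib outer_mult scaleR_matrix_vector_assoc[symmetric])
  have qM: "x \<bullet> ((H + c *\<^sub>R outer v v) *v x) = x \<bullet> (H *v x) + c * (v \<bullet> x)^2" for c x
    by (simp add: Mx inner_add_right inner_commute power2_eq_square)
  have decomp: "x \<bullet> (H *v x) + \<mu> * (v \<bullet> x)^2 = y \<bullet> (H *v y) \<and> y \<bullet> (H *v w) = 0 \<and> x = y + (- \<mu> * (v \<bullet> x)) *\<^sub>R w"
    if "y = x - (- \<mu> * (v \<bullet> x)) *\<^sub>R w" for x y
  proof -
    define a where "a = - \<mu> * (v \<bullet> x)"
    have xy: "x = y + a *\<^sub>R w" using that a_def by simp
    have yv: "y \<bullet> (H *v w) = 0"
    proof -
      have "y \<bullet> (H *v w) = v \<bullet> x - a * (v \<bullet> w)" using that Hw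
        by (simp add: a_def inner_diff_left inner_add_right inner_commute)
      also have "a * (v \<bullet> w) = (v \<bullet> x) * (- \<mu> * (v \<bullet> w))" by (simp add: a_def)
      also have "- \<mu> * (v \<bullet> w) = 1" using vw mu by simp
      finally show ?thesis by simp
    qed
    have "x \<bullet> (H *v x) = y \<bullet> (H *v y) + 2 * ((a *\<^sub>R w) \<bullet> (H *v y)) + a^2 * (w \<bullet> (H *v w))"
      unfolding xy quad_add[OF sym] quad_scale ..
    also have "(a *\<^sub>R w) \<bullet> (H *v y) = 0" using yv sym_inner[OF sym, of w y] by simp
    finally have "x \<bullet> (H *v x) = y \<bullet> (H *v y) - a^2 / \<mu>" using qw by simp
    moreover have "\<mu> * (v \<bullet> x)^2 = a^2 / \<mu>" using mu by (simp add: a_def field_simps power2_eq_square)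
    ultimately have "x \<bullet> (H *v x) + \<mu> * (v \<bullet> x)^2 = y \<bullet> (H *v y)" by simp
    then show ?thesis using yv that by simp
  qed
  have psd: "x \<bullet> (H *v x) + \<mu> * (v \<bullet> x)^2 \<ge> 0" for x
  proof -
    define y where "y = x - (- \<mu> * (v \<bullet> x)) *\<^sub>R w"
    note d = decomp[OF y_def]
    show ?thesis
    proof (cases "y = 0")
      case True then show ?thesis using d by simp
    next
      case False
      then show ?thesis using d signature[OF sym dH neg qwneg False] by simp
    qed
  qed
  have pd: "x \<bullet> (H *v x) + 2 * \<mu> * (v \<bullet> x)^2 > 0" if x0: "x \<noteq> 0" for x
  proof (cases "v \<bullet> x = 0")
    case True
    define y where "y = x - (- \<mu> * (v \<bullet> x)) *\<^sub>R w"
    have "y = x" using True by (simp add: y_def)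
    then have "x \<bullet> (H *v x) > 0" using decomp[OF y_def] signature[OF sym dH neg qwneg x0] by simp
    then show ?thesis using True by simp
  next
    case False
    then have "\<mu> * (v \<bullet> x)^2 > 0" using mu by simp
    then show ?thesis using psd[of x] by simp
  qed
  have Mw: "(H + \<mu> *\<^sub>R outer v v) *v w = 0"
    using Mx[of \<mu> w] Hw vw mu by (simp add: inner_commute field_simps)
  have ker: "{x. (H + \<mu> *\<^sub>R outer v v) *v x = 0} = span {w}"
  proof (intro set_eqI iffI)
    fix x assume "x \<in> {x. (H + \<mu> *\<^sub>R outer v v) *v x = 0}"
    then have "H *v x = (- (\<mu> * (v \<bullet> x))) *\<^sub>R v" using Mx[of \<mu> x] by (simp add: eq_neg_iff_add_eq_0)
    then have "matrix_inv H *v (H *v x) = (- (\<mu> * (v \<bullet> x))) *\<^sub>R w"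
      unfolding w_def by (simp only: matrix_vector_mult_scaleR)
    then have "x = (- (\<mu> * (v \<bullet> x))) *\<^sub>R w" using inv by (simp add: matrix_vector_mul_assoc)
    then show "x \<in> span {w}" by (metis span_singleton rangeI)
  next
    fix x assume "x \<in> span {w}"
    then obtain k where "x = k *\<^sub>R w" by (auto simp: span_singleton)
    then show "x \<in> {x. (H + \<mu> *\<^sub>R outer v v) *v x = 0}" using Mw by (simp add: matrix_vector_mult_scaleR)
  qed
  have detM1: "det (H + \<mu> *\<^sub>R outer v v) = 0"
    using det_nz_kernel[OF _ Mw] w0 by blast
  define K where "K = (\<Sum>k\<in>UNIV. v$k * det (\<chi> i. if i = k then v else row i H))"
  have "det H + \<mu> * K = 0" using detM1 det_rank1_outer[of H \<mu> v] by (simp add: K_def)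
  then have detM2: "det (H + (2 * \<mu>) *\<^sub>R outer v v) = - det H"
    using det_rank1_outer[of H "2 * \<mu>" v] by (simp add: K_def[symmetric] algebra_simps)
  have tr: "transpose (H + c *\<^sub>R outer v v) = H + c *\<^sub>R outer v v" for c
    by (simp add: vec_eq_iff transpose_def outer_def symij mult.commute)
  have c2: "\<forall>x. x \<noteq> 0 \<longrightarrow> x \<bullet> ((H + (2 * \<mu>) *\<^sub>R outer v v) *v x) > 0"
    unfolding qM using pd by (simp add: mult.assoc)
  have c5: "\<forall>x. x \<bullet> ((H + \<mu> *\<^sub>R outer v v) *v x) \<ge> 0"
    unfolding qM using psd by simp
  have c8: "dim {x. (H + \<mu> *\<^sub>R outer v v) *v x = 0} = 1"
    unfolding ker using w0 by simp
  show ?thesis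
    using tr c2 detM2 c5 detM1 ker c8 unfolding w_def by blast
qed

theorem lemma8p2:
  fixes U :: "real^'n \<Rightarrow> real" and ell :: "real^'n \<Rightarrow> real^'n"
    and \<sigma> v :: "real^'n" and \<mu> :: real
  assumes "C3_fun U" and "morse U"
    and "C1_fun ell" and "\<And>x. grad U x \<bullet> ell x = 0"
    and "grad U \<sigma> = 0"
    and "num_neg_eigenvalues (hess U \<sigma>) = 1"
    and "\<mu> > 0"
    and "(hess U \<sigma> - transpose (jacobian ell (at \<sigma>))) *v v = (- \<mu>) *\<^sub>R v"
    and "norm v = 1"
  shows "transpose (hess U \<sigma> + (2 * \<mu>) *\<^sub>R outer v v) = hess U \<sigma> + (2 * \<mu>) *\<^sub>R outer v v
       \<and> (\<forall>x. x \<noteq> 0 \<longrightarrow> x \<bullet> ((hess U \<sigma> + (2 * \<mu>) *\<^sub>R outer v v) *v x) > 0)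
       \<and> det (hess U \<sigma> + (2 * \<mu>) *\<^sub>R outer v v) = - det (hess U \<sigma>)
       \<and> transpose (hess U \<sigma> + \<mu> *\<^sub>R outer v v) = hess U \<sigma> + \<mu> *\<^sub>R outer v v
       \<and> (\<forall>x. x \<bullet> ((hess U \<sigma> + \<mu> *\<^sub>R outer v v) *v x) \<ge> 0)
       \<and> det (hess U \<sigma> + \<mu> *\<^sub>R outer v v) = 0
       \<and> {x. (hess U \<sigma> + \<mu> *\<^sub>R outer v v) *v x = 0} = span {matrix_inv (hess U \<sigma>) *v v}
       \<and> dim {x. (hess U \<sigma> + \<mu> *\<^sub>R outer v v) *v x = 0} = 1"
proof -
  have cU: "C1_fun U" and cG: "C1_fun (grad U)" using assms(1) unfolding C3_fun_def by auto
  have diffU: "\<And>x. U differentiable (at x)" using cU unfolding C1_fun_def by blast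
  have "grad U differentiable (at \<sigma>)" using cG unfolding C1_fun_def by blast
  then have Dg: "(grad U has_derivative (\<lambda>p. hess U \<sigma> *v p)) (at \<sigma>)"
    unfolding jacobian_works hess_def by simp
  have "ell differentiable (at \<sigma>)" using assms(3) unfolding C1_fun_def by blast
  then have Dl: "(ell has_derivative (\<lambda>p. jacobian ell (at \<sigma>) *v p)) (at \<sigma>)"
    unfolding jacobian_works by simp
  have sym: "transpose (hess U \<sigma>) = hess U \<sigma>"
    using hess_sym_entry[OF diffU Dg] by (simp add: vec_eq_iff transpose_def)
  have dH: "det (hess U \<sigma>) \<noteq> 0" using assms(2,5) unfolding morse_def by blast
  have skew: "\<And>d. (hess U \<sigma> *v d) \<bullet> (jacobian ell (at \<sigma>) *v d) = 0"
    by (rule skew_prop[OF assms(4) assms(5) Dg Dl dH])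
  show ?thesis by (rule main_linalg[OF sym dH assms(6) assms(7) skew assms(8) assms(9)])
qed

end
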